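(* Let $\mathbf K$ be a commutative field, $p,q\in\mathbb N$, and let $\tau:\mathcal M_p\to\mathcal M_q$ be a transducer. Then its transducer-matrix $M_\tau\in\mathbf K^{\mathcal M_{q\times p}}$ is a recurrence matrix (i.e. lies in $\mathrm{Rec}_{q\times p}(\mathbf K)$) if and only if $\tau$ is a finite-state transducer.
   Context: $\mathcal M_X$ denotes the free monoid on an alphabet $X$ and $\mathcal M_p$ the free monoid on $\{0,\dots,p-1\}$. For $A:\mathcal M_X\to Y$ the transducer $\tau_A:\mathcal M_X\to\mathcal M_Y$ is the length-preserving map with $\tau_A(\emptyset)=\emptyset$ and $\tau_A(u_1\dots u_n)=A[u_1u_2\dots u_n]A[u_2\dots u_n]\cdots A[u_{n-1}u_n]A[u_n]$; a transducer $\mathcal M_p\to\mathcal M_q$ is a map of the form $\tau_A$ with $A:\mathcal M_p\to\{0,\dots,q-1\}$, and it is finite-state if $A$ can be chosen automatic. A function $A:\mathcal M_X\to Y$ is automatic if there are a finite set $\mathcal V$, $v_*\in\mathcal V$, $\delta:\mathcal V\times X\to\mathcal V$ and $w:\mathcal V\to Y$ (with $X$ finite) such that $A[x_1\dots x_n]=w(v)$, $v$ obtained from $v_*$ by applying $\delta(\cdot,x_1),\dots,\delta(\cdot,x_n)$ successively. $\mathcal M_{q\times p}$ is the set of pairs $(U,W)$ of words of common length with $U$ over $\{0,\dots,q-1\}$, $W$ over $\{0,\dots,p-1\}$; the transducer-matrix of $\tau$ is $M_\tau[U,W]=1$ if $\tau(W)=U$ and $0$ otherwise. For $M:\mathcal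 M_{q\times p}\to\mathbf K$, $(\rho(S,T)M)[U,W]=M[US,WT]$, and $\mathrm{Rec}_{q\times p}(\mathbf K)$ is the set of $M$ with finite-dimensional span of $\{\rho(S,T)M\}$. *)

theory Defs
  imports Main
begin

definition words :: "nat \<Rightarrow> nat list set" where
  "words p = {w. \<forall>x\<in>set w. x < p}"

definition tau :: "(nat list \<Rightarrow> nat) \<Rightarrow> nat list \<Rightarrow> nat list" where
  "tau A u = map (\<lambda>i. A (drop i u)) [0..<length u]"

text \<open>A map M_p -> M_q (only its values on words over p matter) is a transducer.\<close>
definition is_transducer :: "nat \<Rightarrow> nat \<Rightarrow> (nat list \<Rightarrow> nat list) \<Rightarrow> bool" where
  "is_transducer p q \<tau> \<longleftrightarrow>
     (\<exists>A. (\<forall>w\<in>words p. A w < q) \<and> (\<forall>w\<in>words p. \<tau> w = tau A w))"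

text \<open>Automatic functions M_X -> Y with X = {0..p-1}; the finite state set is
  taken inside nat (no loss of generality, any finite set injects into nat).\<close>
definition automatic :: "nat \<Rightarrow> (nat list \<Rightarrow> 'y) \<Rightarrow> bool" where
  "automatic p A \<longleftrightarrow>
     (\<exists>(V::nat set) v0 \<delta> out. finite V \<and> v0 \<in> V \<and>
        (\<forall>v\<in>V. \<forall>x<p. \<delta> v x \<in> V) \<and>
        (\<forall>w\<in>words p. A w = out (foldl \<delta> v0 w)))"

definition finite_state_transducer :: "nat \<Rightarrow> nat \<Rightarrow> (nat list \<Rightarrow> nat list) \<Rightarrow> bool" where
  "finite_state_transducer p q \<tau> \<longleftrightarrow>
     (\<exists>A. (\<forall>w\<in>words p. A w < q) \<and> automatic p A \<and> (\<forall>w\<in>words p. \<tau> w = tau A w))"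

definition pairs :: "nat \<Rightarrow> nat \<Rightarrow> (nat list \<times> nat list) set" where
  "pairs q p = {(U, W). length U = length W \<and> U \<in> words q \<and> W \<in> words p}"

text \<open>Transducer-matrix; extended by 0 outside M_{q x p}.\<close>
definition transducer_matrix ::
  "nat \<Rightarrow> nat \<Rightarrow> (nat list \<Rightarrow> nat list) \<Rightarrow> nat list \<times> nat list \<Rightarrow> 'k::field" where
  "transducer_matrix q p \<tau> = (\<lambda>(U, W). if (U, W) \<in> pairs q p \<and> \<tau> W = U then 1 else 0)"

definition rho :: "nat list \<Rightarrow> nat list \<Rightarrow> (nat list \<times> nat list \<Rightarrow> 'k) \<Rightarrow> nat list \<times> nat list \<Rightarrow> 'k" where
  "rho S T M = (\<lambda>(U, W). M (U @ S, W @ T))"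

definition lin_span :: "('a \<Rightarrow> 'k::field) set \<Rightarrow> ('a \<Rightarrow> 'k) set" where
  "lin_span B = {f. \<exists>F c. finite F \<and> F \<subseteq> B \<and> f = (\<lambda>x. \<Sum>b\<in>F. c b * b x)}"

text \<open>Rec_{q x p}(K): the span of all shifts rho(S,T) M, (S,T) in M_{q x p},
  is finite-dimensional, i.e. contained in the span of a finite set.\<close>
definition Rec :: "nat \<Rightarrow> nat \<Rightarrow> (nat list \<times> nat list \<Rightarrow> 'k::field) set" where
  "Rec q p = {M. \<exists>B. finite B \<and> (\<forall>(S, T)\<in>pairs q p. rho S T M \<in> lin_span B)}"

end

theory Submission
  imports Defs "HOL-Library.FuncSet"
begin

lemma words_append[simp]: "(w @ T \<in> words p) \<longleftrightarrow> w \<in> words p \<and> T \<in> words p"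
  by (auto simp: words_def)

lemma words_Cons[simp]: "(x # T \<in> words p) \<longleftrightarrow> x < p \<and> T \<in> words p"
  by (auto simp: words_def)

lemma words_Nil[simp]: "[] \<in> words p"
  by (auto simp: words_def)

lemma words_drop: "w \<in> words p \<Longrightarrow> drop i w \<in> words p"
  by (auto simp: words_def dest: in_set_dropD)

lemma length_tau[simp]: "length (tau A u) = length u"
  by (simp add: tau_def)

lemma tau_append:
  "tau A (W @ T) = map (\<lambda>i. A (drop i W @ T)) [0..<length W] @ tau A T"
  by (rule nth_equalityI) (auto simp: tau_def nth_append)

lemma tau_words: "\<forall>v\<in>words p. A v < q \<Longrightarrow> W \<in> words p \<Longrightarrow> tau A W \<in> words q"
  by (auto simp: tau_def words_def in_set_conv_nth intro!: words_drop[unfolded words_def, simplified])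

lemma key:
  assumes A: "\<forall>v\<in>words p. A v < q" and tA: "\<forall>v\<in>words p. \<tau> v = tau A v"
    and T: "T \<in> words p" and len: "length S = length T"
  shows "((U @ S, W @ T) \<in> pairs q p \<and> \<tau> (W @ T) = U @ S) \<longleftrightarrow>
         (W \<in> words p \<and> \<tau> T = S \<and> U = map (\<lambda>i. A (drop i W @ T)) [0..<length W])"
  (is "?L \<longleftrightarrow> ?R")
proof
  assume L: ?L
  then have W: "W \<in> words p" by (auto simp: pairs_def)
  have e: "\<tau> (W @ T) = map (\<lambda>i. A (drop i W @ T)) [0..<length W] @ \<tau> T"
    using tA W T by (simp add: tau_append)
  have "length U = length W" using L len by (auto simp: pairs_def)
  then show ?R using L e W by auto
next
  assume R: ?R
  have e: "\<tau> (W @ T) = map (\<lambda>i. A (drop i W @ T)) [0..<length W] @ \<tau> T"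
    using tA R T by (simp add: tau_append)
  have "\<tau> (W @ T) \<in> words q" using tA tau_words[OF A, of "W @ T"] R T by simp
  then show ?L using R e T len by (auto simp: pairs_def)
qed

lemma det:
  fixes B :: "('a \<Rightarrow> 'k::field) set"
  assumes "finite B"
  shows "\<exists>X. finite X \<and> (\<forall>c. (\<forall>x\<in>X. (\<Sum>b\<in>B. c b * b x) = 0) \<longrightarrow> (\<forall>x. (\<Sum>b\<in>B. c b * b x) = 0))"
  using assms
proof (induction B rule: finite_induct)
  case empty
  then show ?case by auto
next
  case (insert b B)
  from insert.IH obtain X where X: "finite X"
    "\<And>c. (\<forall>x\<in>X. (\<Sum>b\<in>B. c b * b x) = 0) \<Longrightarrow> (\<forall>x. (\<Sum>b\<in>B. c b * b x) = 0)" by blast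
  have si: "\<And>c x. (\<Sum>b\<in>insert b B. c b * b x) = c b * b x + (\<Sum>b\<in>B. c b * b x)"
    using insert.hyps by simp
  show ?case
  proof (cases "\<forall>c. (\<forall>x\<in>X. (\<Sum>b\<in>insert b B. c b * b x) = 0) \<longrightarrow> (\<forall>x. (\<Sum>b\<in>insert b B. c b * b x) = 0)")
    case True
    then show ?thesis using X by blast
  next
    case False
    then obtain c0 x0 where c0: "\<forall>x\<in>X. (\<Sum>b\<in>insert b B. c0 b * b x) = 0"
      and x0: "(\<Sum>b\<in>insert b B. c0 b * b x0) \<noteq> 0" by blast
    have cb: "c0 b \<noteq> 0"
    proof
      assume z: "c0 b = 0"
      then have "\<forall>x\<in>X. (\<Sum>b\<in>B. c0 b * b x) = 0" using c0 si by simp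
      then have "\<forall>x. (\<Sum>b\<in>B. c0 b * b x) = 0" using X(2) by blast
      then show False using x0 si z by simp
    qed
    show ?thesis
    proof (intro exI[of _ "insert x0 X"] conjI allI impI)
      show "finite (insert x0 X)" using X by simp
      fix c x
      assume v: "\<forall>x\<in>insert x0 X. (\<Sum>b\<in>insert b B. c b * b x) = 0"
      define k where "k = c b / c0 b"
      define c' where "c' = (\<lambda>b'. c b' - k * c0 b')"
      have eq: "\<And>x. (\<Sum>b\<in>B. c' b * b x) = (\<Sum>b\<in>insert b B. c b * b x) - k * (\<Sum>b\<in>insert b B. c0 b * b x)"
        unfolding si c'_def using cb
        by (simp add: k_def algebra_simps sum_subtractf sum_distrib_left)
      have "\<forall>x\<in>X. (\<Sum>b\<in>B. c' b * b x) = 0" using v c0 eq by simp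
      then have all: "\<forall>x. (\<Sum>b\<in>B. c' b * b x) = 0" using X(2) by blast
      have "k = 0" using all[rule_format, of x0] eq[of x0] v x0 by simp
      then show "(\<Sum>b\<in>insert b B. c b * b x) = 0" using all[rule_format, of x] eq[of x] by simp
    qed
  qed
qed

lemma lin_span_sub:
  fixes B :: "('a \<Rightarrow> 'k::field) set"
  assumes "finite B" "f \<in> lin_span B"
  shows "\<exists>c. f = (\<lambda>x. \<Sum>b\<in>B. c b * b x)"
proof -
  from assms(2) obtain F c where F: "finite F" "F \<subseteq> B" "f = (\<lambda>x. \<Sum>b\<in>F. c b * b x)"
    by (auto simp: lin_span_def)
  have "\<And>x. (\<Sum>b\<in>B. (if b \<in> F then c b else 0) * b x) = (\<Sum>b\<in>F. c b * b x)"
  proof -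
    fix x
    have "(\<Sum>b\<in>B. (if b \<in> F then c b else 0) * b x) = (\<Sum>b\<in>B. (if b \<in> F then c b * b x else 0))"
      by (rule sum.cong) auto
    also have "\<dots> = (\<Sum>b\<in>B \<inter> F. c b * b x)" using assms(1) by (simp add: sum.inter_restrict)
    also have "B \<inter> F = F" using F by auto
    finally show "(\<Sum>b\<in>B. (if b \<in> F then c b else 0) * b x) = (\<Sum>b\<in>F. c b * b x)" .
  qed
  then show ?thesis using F by (intro exI[of _ "\<lambda>b. if b \<in> F then c b else 0"]) auto
qed

lemma finite01:
  fixes B :: "('a \<Rightarrow> 'k::field) set"
  assumes "finite B"
  shows "finite {f. f \<in> lin_span B \<and> (\<forall>x. f x = 0 \<or> f x = 1)}"
proof -
  obtain X where X: "finite X"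
    "\<And>c. (\<forall>x\<in>X. (\<Sum>b\<in>B. c b * b x) = 0) \<Longrightarrow> (\<forall>x. (\<Sum>b\<in>B. c b * b x) = 0)"
    using det[OF assms] by blast
  let ?S = "{f. f \<in> lin_span B \<and> (\<forall>x. f x = 0 \<or> f x = 1)}"
  have inj: "inj_on (\<lambda>f. restrict f X) ?S"
  proof (rule inj_onI)
    fix f g assume f: "f \<in> ?S" and g: "g \<in> ?S" and e: "restrict f X = restrict g X"
    obtain cf where cf: "f = (\<lambda>x. \<Sum>b\<in>B. cf b * b x)" using lin_span_sub[OF assms] f by blast
    obtain cg where cg: "g = (\<lambda>x. \<Sum>b\<in>B. cg b * b x)" using lin_span_sub[OF assms] g by blast
    have d: "\<And>x. (\<Sum>b\<in>B. (cf b - cg b) * b x) = f x - g x"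
      unfolding cf cg by (simp add: algebra_simps sum_subtractf)
    have "\<forall>x\<in>X. f x = g x" using e by (metis restrict_apply')
    then have "\<forall>x\<in>X. (\<Sum>b\<in>B. (cf b - cg b) * b x) = 0" using d by simp
    then have "\<forall>x. (\<Sum>b\<in>B. (cf b - cg b) * b x) = 0" using X(2)[of "\<lambda>b. cf b - cg b"] by simp
    then show "f = g" using d by (intro ext) (metis eq_iff_diff_eq_0)
  qed
  have "(\<lambda>f. restrict f X) ` ?S \<subseteq> PiE X (\<lambda>_. {0, 1})" by auto
  then have "finite ((\<lambda>f. restrict f X) ` ?S)"
    using X(1) finite_subset finite_PiE[of X "\<lambda>_. {0, 1}"] by blast
  then show ?thesis using inj finite_imageD by blast
qed


lemma foldl_in: "\<forall>v\<in>V. \<forall>x<p. \<delta> v x \<in> V \<Longrightarrow> v \<in> V \<Longrightarrow> w \<in> words p \<Longrightarrow> foldl \<delta> v w \<in> V"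
  by (induction w arbitrary: v) auto

lemma aut_fin:
  fixes F :: "nat list \<Rightarrow> 'y" and p :: nat
  defines "res \<equiv> (\<lambda>w T. if T \<in> words p then F (w @ T) else undefined)"
  assumes fin: "finite (res ` words p)"
  shows "automatic p F"
proof -
  let ?RR = "res ` words p"
  obtain h where h: "bij_betw h {0..<card ?RR} ?RR" using ex_bij_betw_nat_finite[OF fin] by blast
  define V where "V = {0..<card ?RR}"
  define g where "g = inv_into V h"
  define v0 where "v0 = g (res [])"
  define \<delta> where "\<delta> = (\<lambda>n x. g (\<lambda>T. if T \<in> words p then h n (x # T) else undefined))"
  define out where "out = (\<lambda>n. h n [])"
  have \<delta>x: "\<And>n x. \<delta> n x = g (\<lambda>T. if T \<in> words p then h n (x # T) else undefined)"
    by (simp add: \<delta>_def)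
  have hV: "h ` V = ?RR" using h unfolding V_def bij_betw_def by auto
  have gV: "\<And>r. r \<in> ?RR \<Longrightarrow> g r \<in> V \<and> h (g r) = r"
    unfolding g_def using hV by (metis inv_into_into f_inv_into_f)
  have step: "\<And>w x. w \<in> words p \<Longrightarrow> x < p \<Longrightarrow>
      (\<lambda>T. if T \<in> words p then res w (x # T) else undefined) = res (w @ [x])"
    unfolding res_def by (auto intro!: ext)
  have main: "\<And>w. w \<in> words p \<Longrightarrow> foldl \<delta> v0 w \<in> V \<and> h (foldl \<delta> v0 w) = res w"
  proof -
    fix w show "w \<in> words p \<Longrightarrow> foldl \<delta> v0 w \<in> V \<and> h (foldl \<delta> v0 w) = res w"
    proof (induction w rule: rev_induct)
      case Nil
      then show ?case using gV[of "res []"] by (simp add: v0_def)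
    next
      case (snoc x w)
      then have w: "w \<in> words p" and x: "x < p" by auto
      have "\<delta> (foldl \<delta> v0 w) x = g (res (w @ [x]))"
        using snoc.IH[OF w] step[OF w x] \<delta>x[of "foldl \<delta> v0 w" x] by metis
      moreover have "res (w @ [x]) \<in> ?RR" using snoc.prems by blast
      ultimately show ?case using gV by simp
    qed
  qed
  have cl: "\<forall>v\<in>V. \<forall>x<p. \<delta> v x \<in> V"
  proof (intro ballI allI impI)
    fix v x assume v: "v \<in> V" and x: "x < p"
    then obtain w where w: "w \<in> words p" "h v = res w" using hV by blast
    have "\<delta> v x = g (res (w @ [x]))" using w step[OF w(1) x] \<delta>x[of v x] by metis
    moreover have "res (w @ [x]) \<in> ?RR" using w x by auto
    ultimately show "\<delta> v x \<in> V" using gV by simp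
  qed
  have "v0 \<in> V" using main[of "[]"] by simp
  moreover have "\<forall>w\<in>words p. F w = out (foldl \<delta> v0 w)"
    using main by (simp add: out_def res_def)
  moreover have "finite V" by (simp add: V_def)
  ultimately show ?thesis unfolding automatic_def using cl by blast
qed

lemma rho_app: "rho S T M (U, W) = M (U @ S, W @ T)"
  by (simp add: rho_def)

lemma tm_app: "transducer_matrix q p \<tau> (U, W) = (if (U, W) \<in> pairs q p \<and> \<tau> W = U then 1 else 0)"
  by (simp add: transducer_matrix_def)

lemma in_span: "b \<in> B \<Longrightarrow> b \<in> lin_span B"
  unfolding lin_span_def by (rule CollectI, rule exI[of _ "{b}"], rule exI[of _ "\<lambda>_. 1"]) auto

lemma zero_span: "(\<lambda>_. 0) \<in> lin_span B"
  unfolding lin_span_def by (rule CollectI, rule exI[of _ "{}"]) auto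

theorem mainTheorem18:
  fixes p q :: nat and \<tau> :: "nat list \<Rightarrow> nat list"
  assumes "is_transducer p q \<tau>"
  shows "((transducer_matrix q p \<tau> :: nat list \<times> nat list \<Rightarrow> 'k::field) \<in> Rec q p)
           \<longleftrightarrow> finite_state_transducer p q \<tau>"
proof
  let ?M = "transducer_matrix q p \<tau> :: nat list \<times> nat list \<Rightarrow> 'k::field"
  assume "finite_state_transducer p q \<tau>"
  then obtain A where A: "\<forall>w\<in>words p. A w < q" "\<forall>w\<in>words p. \<tau> w = tau A w"
    and aut: "automatic p A"
    unfolding finite_state_transducer_def by blast
  obtain V and v0 :: nat and \<delta> and out where
    V: "finite V" "v0 \<in> V" "\<forall>v\<in>V. \<forall>x<p. \<delta> v x \<in> V"
    and ao: "\<forall>w\<in>words p. A w = out (foldl \<delta> v0 w)"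
    using aut unfolding automatic_def by (elim exE conjE) blast
  define st where "st = foldl \<delta> v0"
  define R where "R = st ` words p"
  have "R \<subseteq> V" unfolding R_def st_def using foldl_in[OF V(3) V(2)] by blast
  then have fR: "finite R" using V(1) finite_subset by blast
  define N where "N = (\<lambda>h. (\<lambda>(U, W). if (U, W) \<in> pairs q p \<and> (\<forall>i<length W. U ! i = h (st (drop i W))) then 1 else (0::'k)))"
  define B where "B = N ` PiE R (\<lambda>_. {..<q})"
  have fB: "finite B" unfolding B_def using fR by (simp add: finite_PiE)
  have "\<forall>(S, T)\<in>pairs q p. rho S T ?M \<in> lin_span B"
  proof (intro ballI, clarify)
    fix S T assume ST: "(S, T) \<in> pairs q p"
    then have T: "T \<in> words p" and len: "length S = length T" by (auto simp: pairs_def)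
    show "rho S T ?M \<in> lin_span B"
    proof (cases "\<tau> T = S")
      case False
      have "rho S T ?M = (\<lambda>_. 0)"
        using key[OF A T len] False by (auto simp: rho_def tm_app intro!: ext)
      then show ?thesis using zero_span by metis
    next
      case True
      define h where "h = restrict (\<lambda>v. out (foldl \<delta> v T)) R"
      have hP: "h \<in> PiE R (\<lambda>_. {..<q})"
      proof -
        have "\<And>w. w \<in> words p \<Longrightarrow> out (foldl \<delta> (st w) T) < q"
          using A(1) ao T by (metis foldl_append st_def words_append)
        then show ?thesis unfolding h_def R_def by auto
      qed
      have "rho S T ?M = N h"
      proof (rule ext, clarify)
        fix U W
        have c: "\<And>i. W \<in> words p \<Longrightarrow> A (drop i W @ T) = h (st (drop i W))"
        proof -
          fix i assume W: "W \<in> words p"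
          have "drop i W \<in> words p" using W words_drop by blast
          then show "A (drop i W @ T) = h (st (drop i W))"
            using ao T by (auto simp: h_def R_def st_def)
        qed
        have "((U @ S, W @ T) \<in> pairs q p \<and> \<tau> (W @ T) = U @ S) \<longleftrightarrow>
              ((U, W) \<in> pairs q p \<and> (\<forall>i<length W. U ! i = h (st (drop i W))))"
          unfolding key[OF A T len]
        proof
          assume "W \<in> words p \<and> \<tau> T = S \<and> U = map (\<lambda>i. A (drop i W @ T)) [0..<length W]"
          then have W: "W \<in> words p" and U: "U = map (\<lambda>i. A (drop i W @ T)) [0..<length W]" by auto
          have "\<And>i. A (drop i W @ T) < q" using A(1) W T words_drop by simp
          then have "U \<in> words q" using U by (auto simp: words_def)
          then have "(U, W) \<in> pairs q p" using U W by (simp add: pairs_def)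
          moreover have "\<forall>i<length W. U ! i = h (st (drop i W))" using U c[OF W] by simp
          ultimately show "(U, W) \<in> pairs q p \<and> (\<forall>i<length W. U ! i = h (st (drop i W)))" by blast
        next
          assume "(U, W) \<in> pairs q p \<and> (\<forall>i<length W. U ! i = h (st (drop i W)))"
          then have W: "W \<in> words p" and l: "length U = length W"
            and i: "\<forall>i<length W. U ! i = h (st (drop i W))" by (auto simp: pairs_def)
          have "U = map (\<lambda>i. A (drop i W @ T)) [0..<length W]"
            using l i c[OF W] by (auto intro!: nth_equalityI)
          then show "W \<in> words p \<and> \<tau> T = S \<and> U = map (\<lambda>i. A (drop i W @ T)) [0..<length W]"
            using W True by blast
        qed
        then show "rho S T ?M (U, W) = N h (U, W)"
          by (simp add: rho_app tm_app N_def)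
      qed
      moreover have "N h \<in> B" unfolding B_def using hP by blast
      ultimately show ?thesis using in_span by metis
    qed
  qed
  then show "?M \<in> Rec q p" unfolding Rec_def using fB by blast
next
  let ?M = "transducer_matrix q p \<tau> :: nat list \<times> nat list \<Rightarrow> 'k::field"
  assume "?M \<in> Rec q p"
  then obtain B where fB: "finite B" and sp: "\<forall>(S, T)\<in>pairs q p. rho S T ?M \<in> lin_span B"
    unfolding Rec_def by blast
  obtain A where A: "\<forall>w\<in>words p. A w < q" "\<forall>w\<in>words p. \<tau> w = tau A w"
    using assms unfolding is_transducer_def by blast
  have q0: "0 < q" using A(1)[rule_format, OF words_Nil] by simp
  define A' where "A' = (\<lambda>v. if v = [] then 0 else A v)"
  have A'1: "\<forall>w\<in>words p. A' w < q" using A(1) q0 by (simp add: A'_def)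
  have tA': "\<And>v. tau A' v = tau A v" by (auto simp: tau_def A'_def)
  have A'2: "\<forall>w\<in>words p. \<tau> w = tau A' w" using A(2) tA' by simp
  define gg where "gg = (\<lambda>T w. if w \<in> words p \<and> w \<noteq> [] then A (w @ T) else 0)"
  define G where "G = gg ` words p"
  define C01 where "C01 = {f. f \<in> lin_span B \<and> (\<forall>x. f x = 0 \<or> f x = (1::'k))}"
  have fC: "finite C01" unfolding C01_def using finite01[OF fB] .
  define ex where "ex = (\<lambda>(N::nat list \<times> nat list \<Rightarrow> 'k) w. if w \<in> words p \<and> w \<noteq> [] then hd (SOME U. N (U, w) = 1) else 0)"
  have "G \<subseteq> ex ` C01"
  proof
    fix g assume "g \<in> G"
    then obtain T where T: "T \<in> words p" and g: "g = gg T" unfolding G_def by blast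
    have tT: "\<tau> T \<in> words q" using A T tau_words by metis
    have len: "length (\<tau> T) = length T" using A(2) T by simp
    have pr: "(\<tau> T, T) \<in> pairs q p" using tT T len by (simp add: pairs_def)
    let ?N = "rho (\<tau> T) T ?M"
    have N1: "?N \<in> C01" using sp pr unfolding C01_def by (auto simp: rho_def tm_app)
    have "ex ?N = gg T"
    proof
      fix w
      show "ex ?N w = gg T w"
      proof (cases "w \<in> words p \<and> w \<noteq> []")
        case False then show ?thesis by (auto simp: ex_def gg_def)
      next
        case True
        let ?P = "map (\<lambda>i. A (drop i w @ T)) [0..<length w]"
        have "\<And>U. ?N (U, w) = 1 \<longleftrightarrow> U = ?P"
          using key[OF A T len] True by (simp add: rho_app tm_app)
        then have "(SOME U. ?N (U, w) = 1) = ?P" by simp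
        moreover have "hd ?P = A (w @ T)" using True by (simp add: hd_map upt_conv_Cons)
        ultimately show ?thesis using True by (simp add: ex_def gg_def)
      qed
    qed
    then show "g \<in> ex ` C01" using g N1 by (metis image_eqI)
  qed
  then have fG: "finite G" using fC finite_subset by blast
  define res :: "nat list \<Rightarrow> nat list \<Rightarrow> nat" where "res = (\<lambda>w T. if T \<in> words p then A' (w @ T) else undefined)"
  define \<Psi> :: "((nat list \<Rightarrow> nat) \<Rightarrow> nat) \<Rightarrow> nat list \<Rightarrow> nat" where "\<Psi> = (\<lambda>\<phi> T. if T \<in> words p then \<phi> (gg T) else undefined)"
  have "res ` words p \<subseteq> insert (res []) (\<Psi> ` PiE G (\<lambda>_. {..<q}))"
  proof
    fix r assume "r \<in> res ` words p"
    then obtain w where w: "w \<in> words p" and r: "r = res w" by blast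
    show "r \<in> insert (res []) (\<Psi> ` PiE G (\<lambda>_. {..<q}))"
    proof (cases "w = []")
      case True then show ?thesis using r by simp
    next
      case False
      define \<phi> where "\<phi> = restrict (\<lambda>g. g w) G"
      have "\<phi> \<in> PiE G (\<lambda>_. {..<q})"
        using A(1) w False by (auto simp: \<phi>_def G_def gg_def)
      moreover have "r = \<Psi> \<phi>"
        using w False by (auto simp: r res_def \<Psi>_def \<phi>_def G_def gg_def A'_def intro!: ext)
      ultimately show ?thesis by blast
    qed
  qed
  moreover have "finite (insert (res []) (\<Psi> ` PiE G (\<lambda>_. {..<q})))"
    using fG by (simp add: finite_PiE)
  ultimately have "finite (res ` words p)" using finite_subset by blast
  then have "automatic p A'" using aut_fin[of p A'] unfolding res_def by blast
  then show "finite_state_transducer p q \<tau>"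
    unfolding finite_state_transducer_def using A'1 A'2 by blast
qed

end
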